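(* Let $(\mathbb{R}^d,H,\mathcal{L})$ be a cut-and-project scheme such that $\mathcal{L}$ and $\mathcal{L}^\circ$ are both countable. Let $D$ be a lattice in $\mathbb{R}^d$ such that $D\cap\pi^G(\mathcal{L})=\{0\}$ and $D^\circ\cap\pi^{\widehat G}(\mathcal{L}^\circ)=\{0\}$, let $\mathbb{K}=\mathbb{R}^d/D$ with quotient map $\psi:\mathbb{R}^d\to\mathbb{K}$. Then the map $\phi:\pi^G(\mathcal{L})\to H\times\mathbb{K}$, $\phi(x)=(x^\star,\psi(x))$, has dense range.
   Context: $G=\mathbb{R}^d$. A cut-and-project scheme $(G,H,\mathcal{L})$ consists of locally compact abelian groups $G,H$ and a discrete cocompact subgroup $\mathcal{L}\subseteq G\times H$ such that $\pi^G|_{\mathcal{L}}$ is injective and $\pi^H(\mathcal{L})$ is dense in $H$. The $\star$-map on $\pi^G(\mathcal{L})$ is $x^\star=\pi^H((\pi^G|_{\mathcal{L}})^{-1}(x))$. The dual group $\widehat G$ is identified with $\mathbb{R}^d$ via $x\mapsto(y\mapsto e^{2\pi i\langle x,y\rangle})$; $\mathcal{L}^\circ\subseteq\widehat G\times\widehat H$ is the annihilator of $\mathcal L$ and $\pi^{\widehat G}$ the projection to $\widehat G$. For a lattice $D$, $D^\circ=\{x\in\mathbb{R}^d:\langle y,x\rangle\in\mathbb{Z}\ \forall y\in D\}$. *)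

theory Defs
  imports "HOL-Analysis.Analysis"
begin

definition add_subgroup :: "'a::ab_group_add set \<Rightarrow> bool" where
  "add_subgroup S \<longleftrightarrow> 0 \<in> S \<and> (\<forall>a\<in>S. \<forall>b\<in>S. a + b \<in> S) \<and> (\<forall>a\<in>S. - a \<in> S)"

definition discrete_set :: "'a::topological_space set \<Rightarrow> bool" where
  "discrete_set S \<longleftrightarrow> (\<forall>z\<in>S. \<exists>U. open U \<and> U \<inter> S = {z})"

definition cocompact_set :: "'a::{topological_space, ab_group_add} set \<Rightarrow> bool" where
  "cocompact_set S \<longleftrightarrow> (\<exists>K. compact K \<and> (\<forall>w. \<exists>k\<in>K. \<exists>l\<in>S. w = k + l))"

definition cut_and_project :: "((real^'n::finite) \<times> 'h::{topological_ab_group_add, t2_space}) set \<Rightarrow> bool" where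
  "cut_and_project L \<longleftrightarrow>
     locally_compact_space (euclidean :: 'h topology) \<and>
     add_subgroup L \<and> discrete_set L \<and> cocompact_set L \<and>
     inj_on fst L \<and> closure (snd ` L) = UNIV"

definition star_map :: "('a \<times> 'h) set \<Rightarrow> 'a \<Rightarrow> 'h" where
  "star_map L x = snd (THE z. z \<in> L \<and> fst z = x)"

definition character :: "('h::topological_ab_group_add \<Rightarrow> complex) \<Rightarrow> bool" where
  "character \<eta> \<longleftrightarrow> continuous_on UNIV \<eta> \<and> (\<forall>x. norm (\<eta> x) = 1) \<and>
     (\<forall>a b. \<eta> (a + b) = \<eta> a * \<eta> b)"

text \<open>Annihilator of L in (dual of R^d) x (dual of H), the dual of R^d being identified
  with R^d via y \<mapsto> (x \<mapsto> exp(2 pi i <y,x>)).\<close>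

definition annihilator :: "((real^'n::finite) \<times> 'h::topological_ab_group_add) set \<Rightarrow> ((real^'n::finite) \<times> ('h \<Rightarrow> complex)) set" where
  "annihilator L = {(y, \<eta>). character \<eta> \<and>
     (\<forall>(x, h)\<in>L. cis (2 * pi * (y \<bullet> x)) * \<eta> h = 1)}"

definition lattice :: "(real^'n::finite) set \<Rightarrow> bool" where
  "lattice D \<longleftrightarrow> add_subgroup D \<and> discrete_set D \<and> cocompact_set D"

definition dual_lattice :: "(real^'n::finite) set \<Rightarrow> (real^'n::finite) set" where
  "dual_lattice D = {x. \<forall>y\<in>D. y \<bullet> x \<in> \<int>}"

text \<open>The quotient map R^d \<rightarrow> R^d / D, cosets represented as sets.\<close>

definition coset_map :: "(real^'n::finite) set \<Rightarrow> real^'n \<Rightarrow> (real^'n::finite) set" where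
  "coset_map D x = (\<lambda>d. x + d) ` D"

end

theory Submission
  imports Defs
begin


lemma add_subgroup_diff: "add_subgroup V \<Longrightarrow> a \<in> V \<Longrightarrow> b \<in> V \<Longrightarrow> a - b \<in> V"
  unfolding add_subgroup_def by (metis diff_conv_add_uminus)

lemma add_subgroup_nat_mult:
  fixes v :: "'a::real_vector"
  assumes "add_subgroup V" "v \<in> V" shows "of_nat k *\<^sub>R v \<in> V"
proof (induction k)
  case 0 then show ?case using assms by (simp add: add_subgroup_def)
next
  case (Suc k)
  have "of_nat (Suc k) *\<^sub>R v = of_nat k *\<^sub>R v + v" by (simp add: algebra_simps)
  then show ?case using Suc assms by (simp add: add_subgroup_def)
qed

lemma add_subgroup_int_mult:
  fixes v :: "'a::real_vector"
  assumes "add_subgroup V" "v \<in> V" shows "of_int k *\<^sub>R v \<in> V"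
proof (cases "k \<ge> 0")
  case True
  then have "of_int k *\<^sub>R v = of_nat (nat k) *\<^sub>R v" by simp
  then show ?thesis using add_subgroup_nat_mult[OF assms, of "nat k"] by metis
next
  case False
  then have "of_int k *\<^sub>R v = - (of_nat (nat (-k)) *\<^sub>R v)" by (simp add: scaleR_left.minus)
  then show ?thesis using add_subgroup_nat_mult[OF assms, of "nat (-k)"] assms(1)
    by (simp add: add_subgroup_def)
qed

lemma locally_finite_closed:
  fixes V :: "'a::euclidean_space set"
  assumes "\<And>R. finite (V \<inter> cball 0 R)" shows "closed V"
  unfolding closed_limpt
proof (intro allI impI)
  fix x assume "x islimpt V"
  then have "infinite (V \<inter> ball x 1)" unfolding islimpt_eq_infinite_ball by (meson zero_less_one)
  moreover have "V \<inter> ball x 1 \<subseteq> V \<inter> cball 0 (norm x + 1)"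
    by (auto simp: dist_norm) (metis norm_minus_commute norm_triangle_sub order.trans less_imp_le add_le_cancel_left add_mono_thms_linordered_semiring(1) ) 
  ultimately show "x \<in> V" using assms finite_subset by blast
qed

lemma separated_finite:
  fixes V :: "'a::euclidean_space set"
  assumes sg: "add_subgroup V" and r: "r > 0" and sep: "\<And>v. v \<in> V \<Longrightarrow> v \<noteq> 0 \<Longrightarrow> r \<le> norm v"
  shows "finite (V \<inter> cball 0 R)"
proof (rule ccontr)
  assume inf: "infinite (V \<inter> cball 0 R)"
  have "bounded (V \<inter> cball 0 R)" by (simp add: bounded_Int)
  then obtain x where "x islimpt (V \<inter> cball 0 R)" using bounded_infinite_imp_islimpt[OF subset_refl _ inf] \<open>bounded (V \<inter> cball 0 R)\<close> by blast
  then have lp: "x islimpt V" using islimpt_subset by blast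
  have "r/2 > 0" using r by simp
  then obtain a where a: "a \<in> V" "a \<noteq> x" "dist a x < r/2" using lp islimpt_approachable by blast
  have "min (r/2) (dist a x) > 0" using a r by simp
  then obtain b where b: "b \<in> V" "b \<noteq> x" "dist b x < min (r/2) (dist a x)"
    using lp islimpt_approachable by blast
  have "a \<noteq> b" using b by auto
  then have "a - b \<in> V" "a - b \<noteq> 0" using add_subgroup_diff[OF sg a(1) b(1)] by auto
  then have "r \<le> norm (a - b)" using sep by blast
  moreover have "norm (a - b) < r"
  proof -
    have "norm (a - b) \<le> dist a x + dist b x" by (metis dist_norm dist_triangle2 dist_commute)
    then show ?thesis using a b by simp
  qed
  ultimately show False by simp
qed

lemma closed_subgroup_dual:
  fixes S V :: "'a::euclidean_space set"
  assumes "subspace S" "closed V" "add_subgroup V" "V \<subseteq> S" "V \<noteq> S"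
  shows "\<exists>y\<in>S. y \<noteq> 0 \<and> (\<forall>v\<in>V. y \<bullet> v \<in> \<int>)"
  using assms
proof (induction "dim S" arbitrary: S V rule: less_induct)
  case less
  note IH = less.hyps
  have sS: "subspace S" and cV: "closed V" and sg: "add_subgroup V" and VS: "V \<subseteq> S" and VnS: "V \<noteq> S"
    using less.prems by auto
  have V0: "0 \<in> V" using sg by (simp add: add_subgroup_def)
  have dS0: "dim S \<noteq> 0"
  proof
    assume "dim S = 0"
    then have "S \<subseteq> {0}" using dim_eq_0 by blast
    then show False using VS VnS V0 by blast
  qed
  show ?case
  proof (cases "\<forall>r>0. \<exists>v\<in>V. v \<noteq> 0 \<and> norm v < r")
    case True
    have "\<forall>n. \<exists>x. x \<in> V \<and> x \<noteq> 0 \<and> norm x < 1 / real (Suc n)"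
    proof
      fix n :: nat
      have "1 / real (Suc n) > 0" by simp
      then show "\<exists>x. x \<in> V \<and> x \<noteq> 0 \<and> norm x < 1 / real (Suc n)" using True by blast
    qed
    from choice[OF this] obtain v where v': "\<forall>n. v n \<in> V \<and> v n \<noteq> 0 \<and> norm (v n) < 1 / real (Suc n)"
      by blast
    then have v: "\<And>n. v n \<in> V \<and> v n \<noteq> 0 \<and> norm (v n) < 1 / real (Suc n)" by blast
    define u where "u n = v n /\<^sub>R norm (v n)" for n
    have uin: "u n \<in> S \<inter> sphere 0 1" for n
    proof -
      have "v n \<in> S" "v n \<noteq> 0" using v[of n] VS by auto
      then show ?thesis using sS by (simp add: u_def subspace_scale)
    qed
    have uin': "\<forall>n. u n \<in> S \<inter> sphere 0 1" using uin by blast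
    have "compact (S \<inter> sphere 0 1)" by (rule closed_Int_compact[OF closed_subspace[OF sS] compact_sphere])
    then have "seq_compact (S \<inter> sphere 0 1)" by (rule compact_imp_seq_compact)
    then obtain u0 r where u0: "u0 \<in> S \<inter> sphere 0 1" and r: "strict_mono r" and ur: "(u \<circ> r) \<longlonglongrightarrow> u0"
      using uin' by (rule seq_compactE)
    have v0: "v \<longlonglongrightarrow> 0" by (rule LIMSEQ_norm_0, rule conjunct2[OF conjunct2[OF v]])
    have vr0: "(\<lambda>n. v (r n)) \<longlonglongrightarrow> 0" using LIMSEQ_subseq_LIMSEQ[OF v0 r] by (simp add: o_def)
    have line: "t *\<^sub>R u0 \<in> V" for t
    proof -
      define w where "w n = of_int \<lfloor>t / norm (v (r n))\<rfloor> *\<^sub>R v (r n)" for n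
      have wV: "w n \<in> V" for n unfolding w_def by (rule add_subgroup_int_mult[OF sg]) (use v in auto)
      have eq: "w n - t *\<^sub>R u (r n) = (of_int \<lfloor>t / norm (v (r n))\<rfloor> - t / norm (v (r n))) *\<^sub>R v (r n)" for n
        by (simp add: w_def u_def algebra_simps divide_inverse)
      have "(\<lambda>n. w n - t *\<^sub>R u (r n)) \<longlonglongrightarrow> 0"
      proof (rule Lim_null_comparison)
        show "\<forall>\<^sub>F n in sequentially. norm (w n - t *\<^sub>R u (r n)) \<le> norm (v (r n))"
        proof (intro always_eventually allI)
          fix n
          have "\<bar>of_int \<lfloor>t / norm (v (r n))\<rfloor> - t / norm (v (r n))\<bar> \<le> 1"
            by linarith
          then show "norm (w n - t *\<^sub>R u (r n)) \<le> norm (v (r n))"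
            unfolding eq by (simp add: mult_left_le_one_le)
        qed
        show "(\<lambda>n. norm (v (r n))) \<longlonglongrightarrow> 0" using vr0 tendsto_norm_zero by blast
      qed
      moreover have "(\<lambda>n. t *\<^sub>R u (r n)) \<longlonglongrightarrow> t *\<^sub>R u0"
        using ur by (intro tendsto_scaleR tendsto_const) (simp add: o_def)
      ultimately have "(\<lambda>n. (w n - t *\<^sub>R u (r n)) + t *\<^sub>R u (r n)) \<longlonglongrightarrow> 0 + t *\<^sub>R u0"
        by (rule tendsto_add)
      then have "w \<longlonglongrightarrow> t *\<^sub>R u0" by simp
      then show ?thesis using closed_sequentially[OF cV] wV by blast
    qed
    have u01: "u0 \<bullet> u0 = 1" using u0 norm_eq_1 by auto
    define T where "T = S \<inter> {x. u0 \<bullet> x = 0}"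
    have sT: "subspace T" unfolding T_def by (intro subspace_inter sS subspace_hyperplane)
    have TS: "T \<subset> S"
    proof -
      have "u0 \<notin> T" using u01 unfolding T_def by simp
      then show ?thesis using u0 unfolding T_def by blast
    qed
    have dT: "dim T < dim S"
      using dim_psubset[of T S] TS span_eq_iff[THEN iffD2, OF sT] span_eq_iff[THEN iffD2, OF sS] by simp
    define V' where "V' = V \<inter> T"
    have cV': "closed V'" unfolding V'_def using cV closed_subspace[OF sT] by blast
    have sg': "add_subgroup V'" using sg sT unfolding V'_def add_subgroup_def
      by (auto simp: subspace_add subspace_neg subspace_0)
    have V'T: "V' \<subseteq> T" unfolding V'_def by blast
    have V'nT: "V' \<noteq> T"
    proof
      assume V'T: "V' = T"
      have "S \<subseteq> V"
      proof
        fix s assume s: "s \<in> S"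
        have "s - (u0 \<bullet> s) *\<^sub>R u0 \<in> T" unfolding T_def
          using s u0 u01 sS by (auto simp: subspace_diff subspace_scale inner_diff_right)
        then have "s - (u0 \<bullet> s) *\<^sub>R u0 \<in> V" using V'T V'_def by blast
        then have "(s - (u0 \<bullet> s) *\<^sub>R u0) + (u0 \<bullet> s) *\<^sub>R u0 \<in> V"
          using line sg unfolding add_subgroup_def by blast
        then show "s \<in> V" by simp
      qed
      then show False using VS VnS by blast
    qed
    obtain y where y: "y \<in> T" "y \<noteq> 0" "\<forall>v\<in>V'. y \<bullet> v \<in> \<int>"
      using IH[OF dT sT cV' sg' V'T V'nT] by blast
    have "\<forall>x\<in>V. y \<bullet> x \<in> \<int>"
    proof
      fix x assume x: "x \<in> V"
      have "x - (u0 \<bullet> x) *\<^sub>R u0 \<in> V" using add_subgroup_diff[OF sg x line] .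
      moreover have "x - (u0 \<bullet> x) *\<^sub>R u0 \<in> T" unfolding T_def
        using x VS u0 u01 sS by (auto simp: subspace_diff subspace_scale inner_diff_right)
      ultimately have "y \<bullet> (x - (u0 \<bullet> x) *\<^sub>R u0) \<in> \<int>" using y(3) V'_def by blast
      moreover have "y \<bullet> u0 = 0" using y(1) unfolding T_def by (simp add: inner_commute)
      ultimately show "y \<bullet> x \<in> \<int>" by (simp add: inner_diff_right)
    qed
    then show ?thesis using y TS by blast
  next
    case False
    then obtain r where r: "r > 0" and sep: "\<And>v. v \<in> V \<Longrightarrow> v \<noteq> 0 \<Longrightarrow> r \<le> norm v"
      by (auto simp: not_less)
    have fin: "finite (V \<inter> cball 0 R)" for R using separated_finite[OF sg r sep] by blast
    show ?thesis
    proof (cases "V = {0}")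
      case True
      then obtain y where "y \<in> S" "y \<noteq> 0" using VnS sS subspace_0 by blast
      then show ?thesis using True by auto
    next
      case False
      then obtain v where vV: "v \<in> V" and v0: "v \<noteq> 0" using V0 by blast
      show ?thesis
      proof (cases "dim S = 1")
        case True
        define M where "M = (V \<inter> cball 0 (norm v)) - {0}"
        have finM: "finite M" "M \<noteq> {}" using fin vV v0 unfolding M_def by auto
        define w where "w = arg_min_on norm M"
        have wM: "w \<in> M" and wmin0: "\<And>x. x \<in> M \<Longrightarrow> norm w \<le> norm x"
          using arg_min_if_finite[OF finM, of norm] unfolding w_def by (auto simp: not_less)
        have wV: "w \<in> V" and w0: "w \<noteq> 0" and wv: "norm w \<le> norm v" using wM M_def by auto
        have wmin: "norm w \<le> norm x" if "x \<in> V" "x \<noteq> 0" for x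
          using wmin0[of x] that wv unfolding M_def by (cases "norm x \<le> norm v") auto
        have spw: "span {w} = S"
        proof (rule subspace_dim_equal)
          show "span {w} \<subseteq> S" using wV VS sS by (intro span_minimal) auto
          show "dim S \<le> dim (span {w})" using True w0 by (simp add: dim_span dim_singleton)
        qed (use sS in auto)
        define y where "y = (1 / (w \<bullet> w)) *\<^sub>R w"
        have ww: "w \<bullet> w > 0" using w0 by simp
        have "y \<bullet> x \<in> \<int>" if x: "x \<in> V" for x
        proof -
          have "x \<in> span {w}" using x VS spw by blast
          then obtain t where t: "x = t *\<^sub>R w" using span_singleton by auto
          have zV: "x - of_int \<lfloor>t\<rfloor> *\<^sub>R w \<in> V"
            using add_subgroup_diff[OF sg x add_subgroup_int_mult[OF sg wV]] .
          have zeq: "x - of_int \<lfloor>t\<rfloor> *\<^sub>R w = frac t *\<^sub>R w" by (simp add: t frac_def algebra_simps)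
          have "frac t = 0"
          proof (rule ccontr)
            assume f: "frac t \<noteq> 0"
            then have "frac t *\<^sub>R w \<noteq> 0" using w0 by simp
            then have "norm w \<le> norm (frac t *\<^sub>R w)" using wmin zV zeq by metis
            moreover have "norm (frac t *\<^sub>R w) < norm w"
              using frac_lt_1[of t] frac_ge_0[of t] w0 by simp
            ultimately show False by simp
          qed
          then have "t \<in> \<int>" using frac_eq_0_iff by blast
          moreover have "y \<bullet> x = t" using ww by (simp add: y_def t)
          ultimately show ?thesis by simp
        qed
        moreover have "y \<in> S" "y \<noteq> 0" using wV VS sS w0 ww by (auto simp: y_def subspace_scale)
        ultimately show ?thesis by blast
      next
        case False
        then have dS2: "dim S \<ge> 2" using dS0 by linarith
        define p where "p x = x - ((v \<bullet> x) / (v \<bullet> v)) *\<^sub>R v" for x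
        have vv: "v \<bullet> v > 0" using v0 by simp
        have vp: "v \<bullet> p x = 0" for x using vv by (simp add: p_def inner_diff_right)
        have pS: "p x \<in> S" if "x \<in> S" for x
        proof -
          have "v \<in> S" using vV VS by blast
          then show ?thesis unfolding p_def using that sS by (intro subspace_diff subspace_scale) auto
        qed
        have p_add: "p (a + b) = p a + p b" for a b
          by (simp add: p_def inner_add_right add_divide_distrib scaleR_add_left)
        have p_neg: "p (- a) = - p a" for a by (simp add: p_def)
        have p_diff: "p (a - b) = p a - p b" for a b
          by (simp add: p_def inner_diff_right diff_divide_distrib scaleR_diff_left)
        have p_v: "p (c *\<^sub>R v) = 0" for c using vv by (simp add: p_def)
        have decomp: "x = p x + ((v \<bullet> x) / (v \<bullet> v)) *\<^sub>R v" for x by (simp add: p_def)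
        define T where "T = S \<inter> {x. v \<bullet> x = 0}"
        define V' where "V' = p ` V"
        have sT: "subspace T" unfolding T_def by (intro subspace_inter sS subspace_hyperplane)
        have TS: "T \<subset> S"
        proof -
          have "v \<notin> T" using vv unfolding T_def by simp
          then show ?thesis using vV VS unfolding T_def by blast
        qed
        have dT: "dim T < dim S"
          using dim_psubset[of T S] TS span_eq_iff[THEN iffD2, OF sT] span_eq_iff[THEN iffD2, OF sS] by simp
        have Ssp: "S \<subseteq> span (insert v T)"
        proof
          fix s assume s: "s \<in> S"
          have "p s \<in> T" using pS[OF s] vp unfolding T_def by auto
          then have "p s + ((v \<bullet> s) / (v \<bullet> v)) *\<^sub>R v \<in> span (insert v T)"
            by (meson insertI1 insertI2 span_add span_base span_scale)
          then show "s \<in> span (insert v T)" by (simp only: decomp[of s, symmetric])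
        qed
        have "dim S \<le> dim (insert v T)" using dim_subset[OF Ssp] by (simp add: dim_span)
        also have "\<dots> \<le> dim T + 1" by (simp add: dim_insert)
        finally have "dim T \<ge> 1" using dS2 by simp
        then have "\<not> T \<subseteq> {0}"
        proof (intro notI)
          assume "T \<subseteq> {0}"
          then have "dim T = 0" using dim_eq_0 by blast
          then show False using \<open>dim T \<ge> 1\<close> by linarith
        qed
        then obtain z where zT: "z \<in> T" and z0: "z \<noteq> 0" by blast
        have V'T: "V' \<subseteq> T"
        proof
          fix q assume "q \<in> V'"
          then obtain x where "x \<in> V" "q = p x" unfolding V'_def by blast
          then show "q \<in> T" using VS pS vp unfolding T_def by blast
        qed
        have sg': "add_subgroup V'" unfolding add_subgroup_def V'_def
        proof (intro conjI ballI)
          show "0 \<in> p ` V" using V0 p_v[of 0] by force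
        next
          fix a b assume "a \<in> p ` V" "b \<in> p ` V"
          then obtain a' b' where "a' \<in> V" "b' \<in> V" "a = p a'" "b = p b'" by blast
          then show "a + b \<in> p ` V" using sg p_add unfolding add_subgroup_def by (metis image_eqI)
        next
          fix a assume "a \<in> p ` V"
          then obtain a' where "a' \<in> V" "a = p a'" by blast
          then show "- a \<in> p ` V" using sg p_neg unfolding add_subgroup_def by (metis image_eqI)
        qed
        have finV': "finite (V' \<inter> cball 0 R)" for R
        proof -
          have "V' \<inter> cball 0 R \<subseteq> p ` (V \<inter> cball 0 (R + norm v))"
          proof
            fix q assume "q \<in> V' \<inter> cball 0 R"
            then obtain x where x: "x \<in> V" "q = p x" "norm (p x) \<le> R" unfolding V'_def by auto
            define c where "c = (v \<bullet> x) / (v \<bullet> v)"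
            define x' where "x' = x - of_int \<lfloor>c\<rfloor> *\<^sub>R v"
            have x'V: "x' \<in> V" unfolding x'_def
              using add_subgroup_diff[OF sg x(1) add_subgroup_int_mult[OF sg vV]] .
            have px': "p x' = p x" unfolding x'_def using p_diff p_v by simp
            have "x' = p x + frac c *\<^sub>R v"
              unfolding x'_def frac_def c_def by (subst decomp[of x]) (simp add: algebra_simps)
            then have "norm x' \<le> norm (p x) + frac c * norm v"
              using norm_triangle_ineq[of "p x" "frac c *\<^sub>R v"] frac_ge_0[of c] by simp
            also have "\<dots> \<le> R + norm v"
              using x(3) frac_lt_1[of c] by (simp add: add_mono mult_left_le_one_le)
            finally have "x' \<in> V \<inter> cball 0 (R + norm v)" using x'V by simp
            then show "q \<in> p ` (V \<inter> cball 0 (R + norm v))" using px' x(2) by (metis image_eqI)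
          qed
          then show ?thesis using fin finite_subset by blast
        qed
        have cV': "closed V'" using locally_finite_closed finV' by blast
        have V'nT: "V' \<noteq> T"
        proof
          assume eqT: "V' = T"
          define f where "f n = (1 / real (Suc n)) *\<^sub>R z" for n
          have "range f \<subseteq> V' \<inter> cball 0 (norm z)"
            using zT sT eqT by (auto simp: f_def subspace_scale divide_le_eq algebra_simps)
          moreover have "inj f" unfolding inj_def f_def using z0 by auto
          then have "infinite (range f)" using finite_imageD by blast
          ultimately show False using finV' finite_subset by blast
        qed
        obtain y where y: "y \<in> T" "y \<noteq> 0" "\<forall>q\<in>V'. y \<bullet> q \<in> \<int>"
          using IH[OF dT sT cV' sg' V'T V'nT] by blast
        have "\<forall>x\<in>V. y \<bullet> x \<in> \<int>"
        proof
          fix x assume x: "x \<in> V"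
          have "y \<bullet> p x \<in> \<int>" using y(3) x V'_def by blast
          moreover have "y \<bullet> v = 0" using y(1) unfolding T_def by (simp add: inner_commute)
          ultimately show "y \<bullet> x \<in> \<int>" by (subst decomp[of x]) (simp add: inner_add_right)
        qed
        then show ?thesis using y TS by blast
      qed
    qed
  qed
qed



lemma extend_character:
  fixes P :: "'h::{topological_ab_group_add,t2_space} set" and f :: "'h \<Rightarrow> complex"
  assumes dense: "closure P = UNIV"
    and Padd: "\<And>p q. p \<in> P \<Longrightarrow> q \<in> P \<Longrightarrow> p + q \<in> P"
    and fmul: "\<And>p q. p \<in> P \<Longrightarrow> q \<in> P \<Longrightarrow> f (p + q) = f p * f q"
    and fnorm: "\<And>p. p \<in> P \<Longrightarrow> norm (f p) = 1"
    and est: "\<And>\<epsilon>. \<epsilon> > 0 \<Longrightarrow> \<exists>U. open U \<and> 0 \<in> U \<and> (\<forall>p\<in>P. \<forall>q\<in>P. p - q \<in> U \<longrightarrow> norm (f p - f q) < \<epsilon>)"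
  shows "\<exists>\<eta>. character \<eta> \<and> (\<forall>p\<in>P. \<eta> p = f p)"
proof -
  define F where "F h = inf (nhds h) (principal P)" for h
  have Fnb: "F h \<noteq> bot" for h
  proof
    assume "F h = bot"
    then have "eventually (\<lambda>x. False) (F h)" by simp
    then have "eventually (\<lambda>x. x \<notin> P) (nhds h)" unfolding F_def eventually_inf_principal by simp
    then obtain S where S: "open S" "h \<in> S" "\<forall>x\<in>S. x \<notin> P" unfolding eventually_nhds by blast
    have "h \<in> closure P" using dense by simp
    then have "P \<inter> S \<noteq> {}" using S closure_iff_nhds_not_empty by blast
    then show False using S by blast
  qed
  have evP: "eventually (\<lambda>x. x \<in> P) (F h)" for h unfolding F_def eventually_inf_principal by simp
  have Fle: "F h \<le> nhds h" for h unfolding F_def by simp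
  have transl: "eventually (\<lambda>x. Q (x - h)) (nhds h)" if "eventually Q (nhds 0)" for Q and h :: 'h
  proof -
    have "((\<lambda>x. x - h) \<longlongrightarrow> h - h) (nhds h)" by (rule tendsto_diff[OF filterlim_ident tendsto_const])
    then have "filterlim (\<lambda>x. x - h) (nhds 0) (nhds h)" by simp
    then show ?thesis using that unfolding filterlim_iff by blast
  qed
  have diffnb: "\<exists>W. eventually W (nhds 0) \<and> (\<forall>a b. W a \<and> W b \<longrightarrow> a - b \<in> U)" if U: "open U" "0 \<in> U" for U :: "'h set"
  proof -
    have "((\<lambda>z::'h\<times>'h. fst z - snd z) \<longlongrightarrow> fst (0::'h,0::'h) - snd (0::'h,0::'h)) (nhds (0,0))"
      by (rule tendsto_diff[OF tendsto_fst[OF filterlim_ident] tendsto_snd[OF filterlim_ident]])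
    then have "((\<lambda>z::'h\<times>'h. fst z - snd z) \<longlongrightarrow> 0) (nhds (0,0))" by simp
    then have "eventually (\<lambda>z::'h\<times>'h. fst z - snd z \<in> U) (nhds (0,0))"
      using U topological_tendstoD by blast
    then obtain Pf Pg where PP: "eventually Pf (nhds 0)" "eventually Pg (nhds 0)" "\<forall>x y. Pf x \<longrightarrow> Pg y \<longrightarrow> x - y \<in> U"
      unfolding nhds_prod eventually_prod_filter by auto
    have "eventually (\<lambda>x. Pf x \<and> Pg x) (nhds 0)" using PP(1,2) by (rule eventually_conj)
    then show ?thesis using PP(3) by blast
  qed
  have conv: "\<exists>c. (f \<longlongrightarrow> c) (F h)" for h
  proof -
    have "cauchy_filter (filtermap f (F h))"
      unfolding cauchy_filter_metric_filtermap
    proof (intro allI impI)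
      fix e :: real assume e: "e > 0"
      obtain U where U: "open U" "0 \<in> U" "\<forall>p\<in>P. \<forall>q\<in>P. p - q \<in> U \<longrightarrow> norm (f p - f q) < e"
        using est[OF e] by blast
      obtain W where W: "eventually W (nhds 0)" "\<forall>a b. W a \<and> W b \<longrightarrow> a - b \<in> U"
        using diffnb[OF U(1,2)] by blast
      have "eventually (\<lambda>x. x \<in> P \<longrightarrow> x \<in> P \<and> W (x - h)) (nhds h)"
        using transl[OF W(1)] by (rule eventually_mono) simp
      then have ev: "eventually (\<lambda>x. x \<in> P \<and> W (x - h)) (F h)"
        unfolding F_def eventually_inf_principal .
      have "dist (f x) (f y) < e" if "x \<in> P \<and> W (x - h)" "y \<in> P \<and> W (y - h)" for x y
      proof -
        have "(x - h) - (y - h) \<in> U" using W(2) that by blast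
        then have "x - y \<in> U" by simp
        then show ?thesis using U(3) that by (simp add: dist_norm)
      qed
      then show "\<exists>Pr. eventually Pr (F h) \<and> (\<forall>x y. Pr x \<and> Pr y \<longrightarrow> dist (f x) (f y) < e)"
        using ev by blast
    qed
    then have "convergent_filter (filtermap f (F h))" by (rule cauchy_filter_convergent)
    then show ?thesis unfolding convergent_filter_iff filterlim_def by blast
  qed
  define \<eta> where "\<eta> h = Lim (F h) f" for h
  have lim: "(f \<longlongrightarrow> \<eta> h) (F h)" for h
  proof -
    obtain c where c: "(f \<longlongrightarrow> c) (F h)" using conv by blast
    then have "Lim (F h) f = c" using tendsto_Lim Fnb by blast
    then show ?thesis using c unfolding \<eta>_def by simp
  qed
  have agree: "\<eta> p = f p" if p: "p \<in> P" for p
  proof -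
    have "(f \<longlongrightarrow> f p) (F p)"
      unfolding tendsto_iff
    proof (intro allI impI)
      fix e :: real assume e: "e > 0"
      obtain U where U: "open U" "0 \<in> U" "\<forall>p\<in>P. \<forall>q\<in>P. p - q \<in> U \<longrightarrow> norm (f p - f q) < e"
        using est[OF e] by blast
      have "eventually (\<lambda>x. x - p \<in> U) (nhds p)"
        using transl[OF eventually_nhds_in_open[OF U(1,2)]] .
      then have "eventually (\<lambda>x. x \<in> P \<longrightarrow> dist (f x) (f p) < e) (nhds p)"
        by (rule eventually_mono) (use U(3) p in \<open>auto simp: dist_norm\<close>)
      then show "eventually (\<lambda>x. dist (f x) (f p) < e) (F p)"
        unfolding F_def eventually_inf_principal .
    qed
    then show ?thesis using tendsto_unique[OF Fnb lim] by blast
  qed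
  have norm1: "norm (\<eta> h) = 1" for h
  proof -
    have "((\<lambda>x. norm (f x)) \<longlongrightarrow> norm (\<eta> h)) (F h)" using tendsto_norm[OF lim] .
    moreover have "((\<lambda>x. norm (f x)) \<longlongrightarrow> 1) (F h)"
    proof (rule Lim_transform_eventually[OF tendsto_const])
      show "eventually (\<lambda>x. 1 = norm (f x)) (F h)"
        using evP[of h] by (rule eventually_mono) (simp add: fnorm)
    qed
    ultimately show ?thesis using tendsto_unique[OF Fnb] by blast
  qed
  have mult: "\<eta> (a + b) = \<eta> a * \<eta> b" for a b
  proof -
    let ?G = "F a \<times>\<^sub>F F b"
    have Gnb: "?G \<noteq> bot" using Fnb by (simp add: prod_filter_eq_bot)
    have fstl: "filterlim fst (F a) ?G" by (rule filterlim_fst)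
    have sndl: "filterlim snd (F b) ?G" by (rule filterlim_snd)
    have "((\<lambda>z. fst z + snd z) \<longlongrightarrow> a + b) ?G"
      by (intro tendsto_add filterlim_mono[OF fstl Fle order_refl] filterlim_mono[OF sndl Fle order_refl])
    moreover have evG: "eventually (\<lambda>z. fst z \<in> P \<and> snd z \<in> P) ?G"
      by (rule eventually_prodI[OF evP evP])
    ultimately have "filterlim (\<lambda>z. fst z + snd z) (F (a+b)) ?G"
      unfolding F_def filterlim_inf filterlim_principal using Padd by (auto elim!: eventually_mono)
    then have t1: "((\<lambda>z. f (fst z + snd z)) \<longlongrightarrow> \<eta> (a+b)) ?G" by (rule filterlim_compose[OF lim])
    have t2: "((\<lambda>z. f (fst z) * f (snd z)) \<longlongrightarrow> \<eta> a * \<eta> b) ?G"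
      by (intro tendsto_mult filterlim_compose[OF lim fstl] filterlim_compose[OF lim sndl])
    have "((\<lambda>z. f (fst z + snd z)) \<longlongrightarrow> \<eta> a * \<eta> b) ?G"
    proof (rule Lim_transform_eventually[OF t2])
      show "eventually (\<lambda>z. f (fst z) * f (snd z) = f (fst z + snd z)) ?G"
        using evG by (rule eventually_mono) (simp add: fmul)
    qed
    then show ?thesis using tendsto_unique[OF Gnb t1] by blast
  qed
  have cont: "(\<eta> \<longlongrightarrow> \<eta> h) (nhds h)" for h
    unfolding tendsto_iff
  proof (intro allI impI)
    fix e :: real assume e: "e > 0"
    have "eventually (\<lambda>x. dist (f x) (\<eta> h) < e/2) (F h)" using lim[of h] e unfolding tendsto_iff by (meson half_gt_zero)
    then have "eventually (\<lambda>x. x \<in> P \<longrightarrow> dist (f x) (\<eta> h) < e/2) (nhds h)"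
      unfolding F_def eventually_inf_principal .
    then obtain N where N: "open N" "h \<in> N" "\<forall>x\<in>N. x \<in> P \<longrightarrow> dist (f x) (\<eta> h) < e/2"
      unfolding eventually_nhds by blast
    have "eventually (\<lambda>x. x \<in> N) (nhds h)" by (rule eventually_nhds_in_open[OF N(1,2)])
    then show "eventually (\<lambda>x. dist (\<eta> x) (\<eta> h) < e) (nhds h)"
    proof (rule eventually_mono)
      fix x assume x: "x \<in> N"
      have "eventually (\<lambda>p. dist (f p) (\<eta> x) < e/2) (F x)" using lim[of x] e unfolding tendsto_iff by (meson half_gt_zero)
      moreover have "eventually (\<lambda>p. p \<in> N) (F x)"
        using Fle[of x] eventually_nhds_in_open[OF N(1) x] by (rule filter_leD)
      ultimately have "eventually (\<lambda>p. dist (f p) (\<eta> x) < e/2 \<and> p \<in> N \<and> p \<in> P) (F x)"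
        using evP[of x] by (auto intro: eventually_conj)
      then obtain p where p: "dist (f p) (\<eta> x) < e/2" "p \<in> N" "p \<in> P"
        using eventually_happens'[OF Fnb] by blast
      have "dist (f p) (\<eta> h) < e/2" using N(3) p by blast
      moreover have "dist (\<eta> x) (\<eta> h) \<le> dist (f p) (\<eta> x) + dist (f p) (\<eta> h)"
        by (metis dist_commute dist_triangle)
      ultimately show "dist (\<eta> x) (\<eta> h) < e" using p(1) by linarith
    qed
  qed
  have "continuous_on UNIV \<eta>"
  proof (intro continuous_at_imp_continuous_on ballI)
    fix x :: 'h
    show "isCont \<eta> x" unfolding isCont_def
      using filterlim_mono[OF cont[of x] order_refl at_within_le_nhds] .
  qed
  then have "character \<eta>" unfolding character_def using norm1 mult by blast
  then show ?thesis using agree by blast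
qed



lemma closure_diff_closed:
  fixes A :: "('a::topological_group_add \<times> 'b::topological_group_add) set"
  assumes sub: "\<And>a b. a \<in> A \<Longrightarrow> b \<in> A \<Longrightarrow> a - b \<in> A" and a: "a \<in> closure A" and b: "b \<in> closure A"
  shows "a - b \<in> closure A"
proof -
  have cont1: "continuous_on UNIV (\<lambda>x::'a\<times>'b. x - c)" for c
  proof -
    have "(\<lambda>x::'a\<times>'b. x - c) = (\<lambda>x. (fst x - fst c, snd x - snd c))" by (auto simp: fun_eq_iff prod_eq_iff)
    then show ?thesis by (simp only:) (intro continuous_on_Pair continuous_on_diff continuous_on_fst continuous_on_snd continuous_on_id continuous_on_const)
  qed
  have cont2: "continuous_on UNIV (\<lambda>x::'a\<times>'b. c - x)" for c
  proof -
    have "(\<lambda>x::'a\<times>'b. c - x) = (\<lambda>x. (fst c - fst x, snd c - snd x))" by (auto simp: fun_eq_iff prod_eq_iff)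
    then show ?thesis by (simp only:) (intro continuous_on_Pair continuous_on_diff continuous_on_fst continuous_on_snd continuous_on_id continuous_on_const)
  qed
  have step1: "x - c \<in> closure A" if x: "x \<in> closure A" and c: "c \<in> A" for x c
  proof -
    have "(\<lambda>x. x - c) ` closure A \<subseteq> closure A"
    proof (rule image_closure_subset)
      show "continuous_on (closure A) (\<lambda>x. x - c)" using cont1 continuous_on_subset by blast
      show "(\<lambda>x. x - c) ` A \<subseteq> closure A" using sub c closure_subset by blast
    qed simp
    then show ?thesis using x by blast
  qed
  have "(\<lambda>x. a - x) ` closure A \<subseteq> closure A"
  proof (rule image_closure_subset)
    show "continuous_on (closure A) (\<lambda>x. a - x)" using cont2 continuous_on_subset by blast
    show "(\<lambda>x. a - x) ` A \<subseteq> closure A" using step1 a by blast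
  qed simp
  then show ?thesis using b by blast
qed

theorem lemma6p4:
  fixes L :: "((real^'n::finite) \<times> 'h::{topological_ab_group_add, t2_space}) set"
    and D :: "(real^'n::finite) set"
    and KT :: "(real^'n::finite) set topology"
  assumes cps: "cut_and_project L"
    and cL: "countable L"
    and cLo: "countable (annihilator L)"
    and latD: "lattice D"
    and D1: "D \<inter> fst ` L = {0}"
    and D2: "dual_lattice D \<inter> fst ` annihilator L = {0}"
    and KT: "quotient_map euclidean KT (coset_map D)"
  shows "(prod_topology euclidean KT) closure_of
           ((\<lambda>x. (star_map L x, coset_map D x)) ` (fst ` L))
         = topspace (prod_topology euclidean KT)"
proof -
  from cps have sgL: "add_subgroup L" and injL: "inj_on fst L" and denseP: "closure (snd ` L) = UNIV"
    unfolding cut_and_project_def by auto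
  from latD have sgD: "add_subgroup D" and ccD: "cocompact_set D" unfolding lattice_def by auto
  obtain K where K: "compact K" "\<And>w. \<exists>k\<in>K. \<exists>d\<in>D. w = k + d" using ccD unfolding cocompact_set_def by blast
  have L0: "0 \<in> L" and Ladd: "\<And>a b. a \<in> L \<Longrightarrow> b \<in> L \<Longrightarrow> a + b \<in> L"
    using sgL unfolding add_subgroup_def by auto
  have Ldiff: "\<And>a b. a \<in> L \<Longrightarrow> b \<in> L \<Longrightarrow> a - b \<in> L" using add_subgroup_diff[OF sgL] by blast
  have D0: "0 \<in> D" and Dneg: "\<And>a. a \<in> D \<Longrightarrow> - a \<in> D"
    using sgD unfolding add_subgroup_def by auto
  have Ddiff: "\<And>a b. a \<in> D \<Longrightarrow> b \<in> D \<Longrightarrow> a - b \<in> D" using add_subgroup_diff[OF sgD] by blast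
  define A where "A = {(fst l + d, snd l) | l d. l \<in> L \<and> d \<in> D}"
  have inA: "(fst l + d, snd l) \<in> A" if "l \<in> L" "d \<in> D" for l d using that unfolding A_def by blast
  have Asub: "a - b \<in> A" if aA: "a \<in> A" and bA: "b \<in> A" for a b
  proof -
    obtain l1 d1 where 1: "a = (fst l1 + d1, snd l1)" "l1 \<in> L" "d1 \<in> D" using aA unfolding A_def by blast
    obtain l2 d2 where 2: "b = (fst l2 + d2, snd l2)" "l2 \<in> L" "d2 \<in> D" using bA unfolding A_def by blast
    have "a - b = (fst (l1 - l2) + (d1 - d2), snd (l1 - l2))" using 1 2 by (simp add: algebra_simps)
    then show ?thesis using inA[OF Ldiff[OF 1(2) 2(2)] Ddiff[OF 1(3) 2(3)]] by simp
  qed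
  define C where "C = closure A"
  have AC: "A \<subseteq> C" unfolding C_def by (rule closure_subset)
  have closedC: "closed C" unfolding C_def by simp
  have Csub: "\<And>a b. a \<in> C \<Longrightarrow> b \<in> C \<Longrightarrow> a - b \<in> C"
    unfolding C_def using closure_diff_closed[of A] Asub by blast
  have C0: "(0, 0) \<in> C"
  proof -
    have "(fst (0::(real^'n) \<times> 'h) + 0, snd (0::(real^'n) \<times> 'h)) \<in> A" by (rule inA[OF L0 D0])
    then have "((0::real^'n), (0::'h)) \<in> A" by simp
    then show ?thesis using AC by blast
  qed
  define V where "V = {v. (v, 0::'h) \<in> C}"
  have closedV: "closed V"
  proof -
    have "V = (\<lambda>v. (v, 0::'h)) -` C" unfolding V_def by auto
    moreover have "continuous_on UNIV (\<lambda>v::real^'n. (v, 0::'h))"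
      by (intro continuous_on_Pair continuous_on_id continuous_on_const)
    ultimately show ?thesis using closed_vimage closedC by metis
  qed
  have sgV: "add_subgroup V" unfolding add_subgroup_def
  proof (intro conjI ballI)
    show "0 \<in> V" using C0 V_def by simp
  next
    fix a b assume "a \<in> V" "b \<in> V"
    then have a0: "(a, 0) \<in> C" and b0: "(b, 0) \<in> C" unfolding V_def by auto
    have "(a, 0) - ((0, 0) - (b, 0)) \<in> C" by (rule Csub[OF a0 Csub[OF C0 b0]])
    then show "a + b \<in> V" unfolding V_def by simp
  next
    fix a assume "a \<in> V"
    then have a0: "(a, 0) \<in> C" unfolding V_def by auto
    have "(0, 0) - (a, 0) \<in> C" by (rule Csub[OF C0 a0])
    then show "- a \<in> V" unfolding V_def by simp
  qed
  have LV: "fst l \<in> V" if "l \<in> L" "snd l = 0" for l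
    using inA[OF that(1) D0] AC that(2) unfolding V_def by auto
  have DV: "d \<in> V" if "d \<in> D" for d
    using inA[OF L0 that] AC unfolding V_def by auto
  have VU: "V = UNIV"
  proof (rule ccontr)
    assume VnU: "V \<noteq> UNIV"
    obtain y where y0: "y \<noteq> 0" and yV: "\<forall>v\<in>V. y \<bullet> v \<in> \<int>"
      using closed_subgroup_dual[OF subspace_UNIV closedV sgV _ VnU] by blast
    define e where "e t = cis (2 * pi * t)" for t :: real
    have e_add: "e (a + b) = e a * e b" for a b by (simp add: e_def cis_mult distrib_left)
    have e_int: "e t = 1" if "t \<in> \<int>" for t using that by (simp add: e_def cis_multiple_2pi)
    have e_norm: "norm (e t) = 1" for t by (simp add: e_def)
    have e_neg: "e t * e (-t) = 1" for t using e_add[of t "-t"] e_int[of 0] by simp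
    have e_cong: "e a = e b" if "a - b \<in> \<int>" for a b
    proof -
      have "e a = e (b + (a - b))" by simp
      also have "\<dots> = e b * e (a - b)" by (rule e_add)
      also have "\<dots> = e b" using e_int[OF that] by simp
      finally show ?thesis .
    qed
    have yD: "y \<bullet> d \<in> \<int>" if "d \<in> D" for d using DV[OF that] yV by blast
    have est0: "\<exists>U. open U \<and> 0 \<in> U \<and> (\<forall>l\<in>L. snd l \<in> U \<longrightarrow> norm (e (y \<bullet> fst l) - 1) < \<epsilon>)"
      if \<epsilon>: "\<epsilon> > 0" for \<epsilon>
    proof -
      define B where "B = K \<inter> {k. \<epsilon> \<le> norm (e (y \<bullet> k) - 1)}"
      have "closed {k::real^'n. \<epsilon> \<le> norm (e (y \<bullet> k) - 1)}"
        unfolding e_def by (intro closed_Collect_le continuous_intros continuous_on_cis)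
      then have cB: "compact B" unfolding B_def using compact_Int_closed K(1) by blast
      define W where "W = prod.swap -` (- C)"
      have oW: "open W" unfolding W_def using closedC by (intro open_vimage continuous_on_swap) auto
      have "{0::'h} \<times> B \<subseteq> W"
      proof
        fix z :: "'h \<times> (real^'n)" assume "z \<in> {0} \<times> B"
        then obtain k where z: "z = (0, k)" "k \<in> B" by auto
        have "k \<notin> V"
        proof
          assume "k \<in> V"
          then have "e (y \<bullet> k) = 1" using yV e_int by blast
          then show False using z(2) \<epsilon> unfolding B_def by simp
        qed
        then show "z \<in> W" unfolding W_def V_def z by simp
      qed
      then obtain X0 where X0: "0 \<in> X0" "open X0" "X0 \<times> B \<subseteq> W" using Elementary_Topology.tube_lemma[OF cB oW] by blast
      have "\<forall>l\<in>L. snd l \<in> X0 \<longrightarrow> norm (e (y \<bullet> fst l) - 1) < \<epsilon>"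
      proof (intro ballI impI)
        fix l assume l: "l \<in> L" "snd l \<in> X0"
        obtain k d where kd: "k \<in> K" "d \<in> D" "fst l = k + d" using K(2) by blast
        have "(fst l + - d, snd l) \<in> A" using inA[OF l(1) Dneg[OF kd(2)]] .
        then have kC: "(k, snd l) \<in> C" using AC kd(3) by auto
        have "k \<notin> B"
        proof
          assume "k \<in> B"
          then have "(snd l, k) \<in> W" using X0(3) l(2) by blast
          then show False using kC unfolding W_def by simp
        qed
        then have "norm (e (y \<bullet> k) - 1) < \<epsilon>" using kd(1) unfolding B_def by auto
        moreover have "e (y \<bullet> fst l) = e (y \<bullet> k)"
          using kd(3) e_add e_int[OF yD[OF kd(2)]] by (simp add: inner_add_right)
        ultimately show "norm (e (y \<bullet> fst l) - 1) < \<epsilon>" by simp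
      qed
      then show ?thesis using X0 by blast
    qed
    define f where "f h = e (- (y \<bullet> fst (SOME l. l \<in> L \<and> snd l = h)))" for h
    have fL: "f (snd l) = e (- (y \<bullet> fst l))" if l: "l \<in> L" for l
    proof -
      define l' where "l' = (SOME l'. l' \<in> L \<and> snd l' = snd l)"
      have l': "l' \<in> L" "snd l' = snd l"
        unfolding l'_def using someI[of "\<lambda>l'. l' \<in> L \<and> snd l' = snd l" l] l by auto
      have "l - l' \<in> L" using Ldiff l l'(1) by blast
      moreover have "snd (l - l') = 0" using l'(2) by simp
      ultimately have "fst (l - l') \<in> V" using LV by blast
      then have "y \<bullet> (fst l - fst l') \<in> \<int>" using yV by simp
      then have "(- (y \<bullet> fst l')) - (- (y \<bullet> fst l)) \<in> \<int>" by (simp add: inner_diff_right)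
      then have "e (- (y \<bullet> fst l')) = e (- (y \<bullet> fst l))" by (rule e_cong)
      then show ?thesis unfolding f_def l'_def .
    qed
    define P where "P = snd ` L"
    have Pdense: "closure P = UNIV" using denseP P_def by simp
    have Padd: "p + q \<in> P" if pq: "p \<in> P" "q \<in> P" for p q
    proof -
      obtain l1 l2 where "l1 \<in> L" "l2 \<in> L" "p = snd l1" "q = snd l2" using pq P_def by blast
      then show ?thesis using Ladd unfolding P_def by (metis image_eqI snd_add)
    qed
    have fmul: "f (p + q) = f p * f q" if pq: "p \<in> P" "q \<in> P" for p q
    proof -
      obtain l1 l2 where l: "l1 \<in> L" "l2 \<in> L" "p = snd l1" "q = snd l2" using pq P_def by blast
      have "f (p + q) = f (snd (l1 + l2))" using l by simp
      also have "\<dots> = e (- (y \<bullet> fst l1) + - (y \<bullet> fst l2))"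
        using fL[OF Ladd[OF l(1,2)]] by (simp add: inner_add_right)
      also have "\<dots> = e (- (y \<bullet> fst l1)) * e (- (y \<bullet> fst l2))" by (rule e_add)
      also have "\<dots> = f p * f q" using fL l by simp
      finally show ?thesis .
    qed
    have fnorm: "norm (f p) = 1" if "p \<in> P" for p
      using that fL e_norm unfolding P_def by auto
    have est: "\<exists>U. open U \<and> 0 \<in> U \<and> (\<forall>p\<in>P. \<forall>q\<in>P. p - q \<in> U \<longrightarrow> norm (f p - f q) < \<epsilon>)"
      if \<epsilon>: "\<epsilon> > 0" for \<epsilon>
    proof -
      obtain U where U: "open U" "0 \<in> U" "\<forall>l\<in>L. snd l \<in> U \<longrightarrow> norm (e (y \<bullet> fst l) - 1) < \<epsilon>"
        using est0[OF \<epsilon>] by blast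
      have "norm (f p - f q) < \<epsilon>" if pq: "p \<in> P" "q \<in> P" "p - q \<in> U" for p q
      proof -
        obtain l1 l2 where l: "l1 \<in> L" "l2 \<in> L" "p = snd l1" "q = snd l2" using pq P_def by blast
        define a where "a = y \<bullet> fst l1"
        define b where "b = y \<bullet> fst l2"
        have "snd (l1 - l2) \<in> U" using pq(3) l by simp
        then have "norm (e (y \<bullet> fst (l1 - l2)) - 1) < \<epsilon>" using U(3) Ldiff[OF l(1,2)] by blast
        then have 1: "norm (e (a - b) - 1) < \<epsilon>" by (simp add: a_def b_def inner_diff_right)
        have "e (- b) = e (- a) * e (a - b)" using e_add[of "-a" "a - b"] by simp
        then have "f p - f q = e (- a) * (1 - e (a - b))" using fL l unfolding a_def b_def
          by (simp add: algebra_simps)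
        then have "norm (f p - f q) = norm (e (a - b) - 1)"
          by (simp add: norm_mult e_norm norm_minus_commute)
        then show ?thesis using 1 by simp
      qed
      then show ?thesis using U by blast
    qed
    obtain \<eta> where \<eta>: "character \<eta>" "\<forall>p\<in>P. \<eta> p = f p"
      using extend_character[OF Pdense Padd fmul fnorm est] by blast
    have "(y, \<eta>) \<in> annihilator L"
      unfolding annihilator_def
    proof (simp add: \<eta>(1), intro ballI)
      fix z assume z: "z \<in> L"
      obtain x h where xh: "z = (x, h)" by fastforce
      have "\<eta> h = f (snd z)" using \<eta>(2) z xh P_def by auto
      also have "\<dots> = e (- (y \<bullet> x))" using fL[OF z] xh by simp
      finally have "cis (2 * pi * (y \<bullet> x)) * \<eta> h = 1" using e_neg unfolding e_def by simp
      then show "case z of (x, h) \<Rightarrow> cis (2 * pi * (y \<bullet> x)) * \<eta> h = 1" using xh by simp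
    qed
    then have "y \<in> fst ` annihilator L" by force
    moreover have "y \<in> dual_lattice D" unfolding dual_lattice_def using yD by (simp add: inner_commute)
    ultimately show False using D2 y0 by blast
  qed
  have CU: "C = UNIV"
  proof -
    have "(UNIV::(real^'n) set) \<times> snd ` L \<subseteq> C"
    proof
      fix z :: "(real^'n) \<times> 'h" assume "z \<in> UNIV \<times> snd ` L"
      then obtain x :: "real^'n" and l where z: "z = (x, snd l)" "l \<in> L" by auto
      have "(fst l + 0, snd l) \<in> A" by (rule inA[OF z(2) D0])
      then have "l \<in> A" by simp
      then have "l \<in> C" using AC by blast
      moreover have "(fst l - x, 0) \<in> C" using VU unfolding V_def by auto
      ultimately have "l - (fst l - x, 0) \<in> C" using Csub by blast
      moreover have "l - (fst l - x, 0) = z" using z by (simp add: prod_eq_iff)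
      ultimately show "z \<in> C" by simp
    qed
    then have "closure ((UNIV::(real^'n) set) \<times> snd ` L) \<subseteq> C" using closure_minimal closedC by blast
    then show ?thesis using denseP by (auto simp add: closure_Times)
  qed
  define g where "g z = (snd z, coset_map D (fst z))" for z :: "(real^'n) \<times> 'h"
  have coset_shift: "coset_map D (x + d) = coset_map D x" if d: "d \<in> D" for x d
  proof -
    have "(\<lambda>d'. x + d + d') ` D = (\<lambda>d'. x + d') ` D"
    proof
      show "(\<lambda>d'. x + d + d') ` D \<subseteq> (\<lambda>d'. x + d') ` D"
      proof
        fix z assume "z \<in> (\<lambda>d'. x + d + d') ` D"
        then obtain d' where "d' \<in> D" "z = x + d + d'" by blast
        then have "d + d' \<in> D" "z = x + (d + d')" using d sgD unfolding add_subgroup_def by (auto simp: add.assoc)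
        then show "z \<in> (\<lambda>d'. x + d') ` D" by blast
      qed
      show "(\<lambda>d'. x + d') ` D \<subseteq> (\<lambda>d'. x + d + d') ` D"
      proof
        fix z assume "z \<in> (\<lambda>d'. x + d') ` D"
        then obtain d' where "d' \<in> D" "z = x + d'" by blast
        then have "d' - d \<in> D" "z = x + d + (d' - d)" using d Ddiff by auto
        then show "z \<in> (\<lambda>d'. x + d + d') ` D" by blast
      qed
    qed
    then show ?thesis unfolding coset_map_def .
  qed
  have star: "star_map L (fst l) = snd l" if l: "l \<in> L" for l
  proof -
    have "(THE z. z \<in> L \<and> fst z = fst l) = l"
      by (rule the_equality) (use l injL in \<open>auto simp: inj_on_def\<close>)
    then show ?thesis unfolding star_map_def by simp
  qed
  have gA: "g ` A \<subseteq> (\<lambda>x. (star_map L x, coset_map D x)) ` (fst ` L)"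
  proof
    fix z assume "z \<in> g ` A"
    then obtain l d where ld: "l \<in> L" "d \<in> D" "z = g (fst l + d, snd l)" unfolding A_def by blast
    then have "z = (star_map L (fst l), coset_map D (fst l))"
      using star coset_shift unfolding g_def by simp
    then show "z \<in> (\<lambda>x. (star_map L x, coset_map D x)) ` (fst ` L)" using ld(1) by blast
  qed
  have cg: "continuous_map euclidean (prod_topology euclidean KT) g"
    unfolding g_def
  proof (intro continuous_map_pairedI)
    show "continuous_map euclidean euclidean (\<lambda>x::(real^'n) \<times> 'h. snd x)"
      unfolding continuous_map_iff_continuous2 by (intro continuous_on_snd continuous_on_id)
    have "continuous_map euclidean euclidean (\<lambda>x::(real^'n) \<times> 'h. fst x)"
      unfolding continuous_map_iff_continuous2 by (intro continuous_on_fst continuous_on_id)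
    then have "continuous_map euclidean KT (coset_map D \<circ> (\<lambda>x::(real^'n) \<times> 'h. fst x))"
      using continuous_map_compose quotient_imp_continuous_map[OF KT] by blast
    then show "continuous_map euclidean KT (\<lambda>x::(real^'n) \<times> 'h. coset_map D (fst x))"
      by (simp add: o_def)
  qed
  have "g ` (euclidean closure_of A) \<subseteq> prod_topology euclidean KT closure_of (g ` A)"
    by (rule continuous_map_image_closure_subset[OF cg])
  then have gU: "g ` UNIV \<subseteq> prod_topology euclidean KT closure_of (g ` A)"
    using CU unfolding C_def by simp
  have topKT: "topspace KT = coset_map D ` UNIV"
    using KT unfolding quotient_map_def by simp
  have topY: "topspace (prod_topology euclidean KT) = g ` UNIV"
  proof -
    have "(UNIV::'h set) \<times> coset_map D ` UNIV \<subseteq> g ` UNIV"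
    proof
      fix z :: "'h \<times> (real^'n) set" assume "z \<in> UNIV \<times> coset_map D ` UNIV"
      then obtain h x where "z = (h, coset_map D x)" by auto
      then have "z = g (x, h)" unfolding g_def by simp
      then show "z \<in> g ` UNIV" by blast
    qed
    moreover have "g ` UNIV \<subseteq> (UNIV::'h set) \<times> coset_map D ` UNIV" unfolding g_def by auto
    ultimately show ?thesis using topKT by simp
  qed
  show ?thesis
  proof
    show "prod_topology euclidean KT closure_of ((\<lambda>x. (star_map L x, coset_map D x)) ` fst ` L)
          \<subseteq> topspace (prod_topology euclidean KT)" by (rule closure_of_subset_topspace)
    show "topspace (prod_topology euclidean KT)
          \<subseteq> prod_topology euclidean KT closure_of ((\<lambda>x. (star_map L x, coset_map D x)) ` fst ` L)"
      using topY gU closure_of_mono[OF gA] by blast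
  qed
qed


end
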